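(* For any finite simple graphs $G$ and $H$, the strong product graph $G\boxtimes H$ is homotopic to the Cartesian simplex product graph $G\times H$.
   Context: For graphs $G=(V,E)$, $H=(W,F)$ the strong product $G\boxtimes H$ has vertex set $V\times W$, and distinct $(a,b),(c,d)$ are adjacent iff ($a=c$ and $\{b,d\}\in F$) or ($b=d$ and $\{a,c\}\in E$) or ($\{a,c\}\in E$ and $\{b,d\}\in F$). A simplex of a graph is the vertex set of a nonempty complete subgraph. The Cartesian simplex product $G\times H$ is the graph whose vertices are the pairs $(x,y)$ with $x$ a simplex of $G$ and $y$ a simplex of $H$, two distinct vertices $(x,y),(u,v)$ being adjacent iff ($x\subseteq u$ and $y\subseteq v$) or ($u\subseteq x$ and $v\subseteq y$). Homotopy of graphs is combinatorial (Ivashchenko/Evako style): the unit sphere $S(x)$ of a vertex $x$ is the subgraph induced by its neighbours; $K_1$ is contractible, and inductively a graph is contractible if it has a vertex $x$ such that $S(x)$ and $G\setminus x$ are contractible. A homotopy step is either removing a vertex whose unit sphere is contractible (together with its edges), or the inverse operation of adding a new vertex joined exactly to the vertices of a contractible induced subgraph. Two graphs are homotopic if they are related by a finite sequence of homotopy steps (and graph isomorphisms). *)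

theory Defs
  imports Main
begin

type_synonym 'a graph = "'a set \<times> 'a set set"

definition verts :: "'a graph \<Rightarrow> 'a set" where "verts G = fst G"
definition edges :: "'a graph \<Rightarrow> 'a set set" where "edges G = snd G"

definition finite_simple_graph :: "'a graph \<Rightarrow> bool" where
  "finite_simple_graph G \<longleftrightarrow> finite (verts G) \<and>
     (\<forall>e\<in>edges G. \<exists>a b. a \<noteq> b \<and> a \<in> verts G \<and> b \<in> verts G \<and> e = {a, b})"

definition induced :: "'a graph \<Rightarrow> 'a set \<Rightarrow> 'a graph" where
  "induced G A = (A \<inter> verts G, {e \<in> edges G. e \<subseteq> A})"

definition sphere :: "'a graph \<Rightarrow> 'a \<Rightarrow> 'a graph" where
  "sphere G x = induced G {y. {x, y} \<in> edges G}"

definition delv :: "'a graph \<Rightarrow> 'a \<Rightarrow> 'a graph" where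
  "delv G x = induced G (verts G - {x})"

inductive contractible :: "'a graph \<Rightarrow> bool" where
  K1: "contractible ({v}, {})"
| step: "x \<in> verts G \<Longrightarrow> contractible (sphere G x) \<Longrightarrow> contractible (delv G x)
         \<Longrightarrow> contractible G"

definition simplices :: "'a graph \<Rightarrow> 'a set set" where
  "simplices G = {A. A \<noteq> {} \<and> A \<subseteq> verts G \<and>
      (\<forall>a\<in>A. \<forall>b\<in>A. a \<noteq> b \<longrightarrow> {a, b} \<in> edges G)}"

definition strong_prod :: "'a graph \<Rightarrow> 'b graph \<Rightarrow> ('a \<times> 'b) graph" where
  "strong_prod G H = (verts G \<times> verts H,
     {{(a, b), (c, d)} | a b c d. a \<in> verts G \<and> c \<in> verts G \<and> b \<in> verts H \<and> d \<in> verts H \<and>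
        (a, b) \<noteq> (c, d) \<and>
        ((a = c \<and> {b, d} \<in> edges H) \<or> (b = d \<and> {a, c} \<in> edges G) \<or>
         ({a, c} \<in> edges G \<and> {b, d} \<in> edges H))})"

definition simplex_prod :: "'a graph \<Rightarrow> 'b graph \<Rightarrow> ('a set \<times> 'b set) graph" where
  "simplex_prod G H = (simplices G \<times> simplices H,
     {{(x, y), (u, v)} | x y u v. x \<in> simplices G \<and> u \<in> simplices G \<and>
        y \<in> simplices H \<and> v \<in> simplices H \<and> (x, y) \<noteq> (u, v) \<and>
        ((x \<subseteq> u \<and> y \<subseteq> v) \<or> (u \<subseteq> x \<and> v \<subseteq> y))})"

definition gmap :: "('a \<Rightarrow> 'b) \<Rightarrow> 'a graph \<Rightarrow> 'b graph" where
  "gmap f G = (f ` verts G, (\<lambda>e. f ` e) ` edges G)"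

definition graph_iso :: "'a graph \<Rightarrow> 'a graph \<Rightarrow> bool" where
  "graph_iso G G' \<longleftrightarrow> (\<exists>f. inj_on f (verts G) \<and> G' = gmap f G)"

text \<open>One homotopy step (on graphs over a common vertex universe): removing a vertex
with contractible unit sphere, the inverse operation (adding a vertex whose unit
sphere is a contractible induced subgraph), or a graph isomorphism.\<close>
definition removal_step :: "'a graph \<Rightarrow> 'a graph \<Rightarrow> bool" where
  "removal_step G G' \<longleftrightarrow>
     (\<exists>x\<in>verts G. contractible (sphere G x) \<and> G' = delv G x)"

definition homotopy_step :: "'a graph \<Rightarrow> 'a graph \<Rightarrow> bool" where
  "homotopy_step G G' \<longleftrightarrow> finite_simple_graph G \<and> finite_simple_graph G' \<and>
     (removal_step G G' \<or> removal_step G' G \<or> graph_iso G G')"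

text \<open>Homotopy between graphs with possibly different vertex types: embed both
(isomorphically) into graphs on nat, which leaves room for new vertices, and
connect them by a finite sequence of homotopy steps.\<close>
definition homotopic :: "'a graph \<Rightarrow> 'b graph \<Rightarrow> bool" where
  "homotopic G H \<longleftrightarrow> (\<exists>(f::'a \<Rightarrow> nat) (g::'b \<Rightarrow> nat).
      inj_on f (verts G) \<and> inj_on g (verts H) \<and>
      homotopy_step\<^sup>*\<^sup>* (gmap f G) (gmap g H))"

end

theory Submission
  imports Defs
begin

definition gm :: "('v \<Rightarrow> 'w) \<Rightarrow> 'v set \<Rightarrow> ('v \<Rightarrow> 'v \<Rightarrow> bool) \<Rightarrow> 'w graph" where
  "gm h V R = (h ` V, {{h a, h b} | a b. a \<in> V \<and> b \<in> V \<and> a \<noteq> b \<and> R a b})"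

definition nbrs :: "'v set \<Rightarrow> ('v \<Rightarrow> 'v \<Rightarrow> bool) \<Rightarrow> 'v \<Rightarrow> 'v set" where
  "nbrs V R x = {y\<in>V. y \<noteq> x \<and> (R x y \<or> R y x)}"

lemma verts_gm[simp]: "verts (gm h V R) = h ` V" by (simp add: gm_def verts_def)
lemma edges_gm: "edges (gm h V R) = {{h a, h b} | a b. a \<in> V \<and> b \<in> V \<and> a \<noteq> b \<and> R a b}"
  by (simp add: gm_def edges_def)

lemma edge_gm:
  assumes "inj_on h V" "x \<in> V"
  shows "{h x, z} \<in> edges (gm h V R) \<longleftrightarrow> (\<exists>y\<in>nbrs V R x. z = h y)"
proof
  assume "{h x, z} \<in> edges (gm h V R)"
  then obtain a b where ab: "{h x, z} = {h a, h b}" "a \<in> V" "b \<in> V" "a \<noteq> b" "R a b"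
    unfolding edges_gm by blast
  from ab(1) have "(h x = h a \<and> z = h b) \<or> (h x = h b \<and> z = h a)" by (auto simp: doubleton_eq_iff)
  then show "\<exists>y\<in>nbrs V R x. z = h y"
    using ab assms by (auto simp: nbrs_def inj_on_eq_iff)
next
  assume "\<exists>y\<in>nbrs V R x. z = h y"
  then obtain y where y: "y \<in> V" "y \<noteq> x" "R x y \<or> R y x" "z = h y" by (auto simp: nbrs_def)
  show "{h x, z} \<in> edges (gm h V R)"
  proof (cases "R x y")
    case True then show ?thesis using y assms unfolding edges_gm by blast
  next
    case False then have "R y x" using y by auto
    then have "{h y, h x} \<in> edges (gm h V R)" using y assms unfolding edges_gm by blast
    then show ?thesis using y by (simp add: insert_commute)
  qed
qed

lemma nbrs_sub: "nbrs V R x \<subseteq> V - {x}" by (auto simp: nbrs_def)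

lemma gm_eta: "gm h W R = (h ` W, edges (gm h W R))" by (simp add: gm_def edges_def)

lemma induced_gm:
  assumes "inj_on h V" "W \<subseteq> V"
  shows "induced (gm h V R) (h ` W) = gm h W R"
proof -
  have 1: "h ` W \<inter> h ` V = h ` W" by (rule Int_absorb2) (rule image_mono[OF assms(2)])
  have 2: "{e \<in> edges (gm h V R). e \<subseteq> h ` W} = edges (gm h W R)"
  proof (rule set_eqI, rule iffI)
    fix e assume "e \<in> {e \<in> edges (gm h V R). e \<subseteq> h ` W}"
    then have e1: "e \<in> edges (gm h V R)" and e2: "e \<subseteq> h ` W" by simp_all
    from e1 obtain a b where ab0: "e = {h a, h b}" "a \<in> V" "b \<in> V" "a \<noteq> b" "R a b"
      unfolding edges_gm by blast
    from e2 ab0(1) have "h a \<in> h ` W" "h b \<in> h ` W" by simp_all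
    note ab = ab0 this
    have "a \<in> W"
    proof -
      obtain w where w: "w \<in> W" "h a = h w" using ab(6) by blast
      have "w \<in> V" using w(1) assms(2) by blast
      then have "a = w" using inj_onD[OF assms(1) w(2)] ab(2) by blast
      then show ?thesis using w(1) by simp
    qed
    moreover have "b \<in> W"
    proof -
      obtain w where w: "w \<in> W" "h b = h w" using ab(7) by blast
      have "w \<in> V" using w(1) assms(2) by blast
      then have "b = w" using inj_onD[OF assms(1) w(2)] ab(3) by blast
      then show ?thesis using w(1) by simp
    qed
    ultimately show "e \<in> edges (gm h W R)" using ab(1,4,5) unfolding edges_gm by blast
  next
    fix e assume "e \<in> edges (gm h W R)"
    then obtain a b where ab: "e = {h a, h b}" "a \<in> W" "b \<in> W" "a \<noteq> b" "R a b"
      unfolding edges_gm by blast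
    then have "e \<in> edges (gm h V R)" using assms(2) unfolding edges_gm by blast
    moreover have "e \<subseteq> h ` W" using ab by auto
    ultimately show "e \<in> {e \<in> edges (gm h V R). e \<subseteq> h ` W}" by simp
  qed
  have "induced (gm h V R) (h ` W) = (h ` W \<inter> h ` V, {e \<in> edges (gm h V R). e \<subseteq> h ` W})"
    by (simp only: induced_def verts_gm)
  also have "\<dots> = gm h W R" by (subst gm_eta) (simp only: 1 2)
  finally show ?thesis .
qed

lemma sphere_gm:
  assumes "inj_on h V" "x \<in> V"
  shows "sphere (gm h V R) (h x) = gm h (nbrs V R x) R"
proof -
  have "{y. {h x, y} \<in> edges (gm h V R)} = h ` nbrs V R x"
    using edge_gm[OF assms] by auto
  moreover have "nbrs V R x \<subseteq> V" using nbrs_sub by fastforce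
  ultimately show ?thesis unfolding sphere_def using induced_gm[OF assms(1), of "nbrs V R x" R] by simp
qed

lemma delv_gm:
  assumes "inj_on h V" "x \<in> V"
  shows "delv (gm h V R) (h x) = gm h (V - {x}) R"
proof -
  have "h ` V - {h x} = h ` (V - {x})" using assms by (auto simp: inj_on_eq_iff)
  then show ?thesis unfolding delv_def verts_gm using induced_gm[OF assms(1), of "V - {x}" R] by simp
qed

lemma contr_step_gm:
  assumes "inj_on h V" "x \<in> V" "contractible (gm h (nbrs V R x) R)" "contractible (gm h (V - {x}) R)"
  shows "contractible (gm h V R)"
  by (rule contractible.step[of "h x"]) (simp_all add: assms sphere_gm delv_gm)

lemma gm_single: "gm h {c} R = ({h c}, {})"
  by (auto simp: gm_def)

lemma cone_gm:
  assumes "finite V" "c \<in> V" "inj_on h V" "\<forall>y\<in>V. y \<noteq> c \<longrightarrow> R c y \<or> R y c"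
  shows "contractible (gm h V R)"
  using assms
proof (induction "card V" arbitrary: V rule: less_induct)
  case less
  show ?case
  proof (cases "V = {c}")
    case True then show ?thesis by (simp add: gm_single contractible.K1)
  next
    case False
    then obtain y where y: "y \<in> V" "y \<noteq> c" using less.prems by blast
    have n1: "c \<in> nbrs V R y" using y less.prems by (auto simp: nbrs_def)
    have n2: "nbrs V R y \<subseteq> V - {y}" by (rule nbrs_sub)
    have c2: "card (V - {y}) < card V" using y less.prems(1) by (meson card_Diff1_less)
    have c1: "card (nbrs V R y) < card V"
      using le_less_trans[OF card_mono[OF _ n2] c2] less.prems(1) by simp
    show ?thesis
    proof (rule contr_step_gm[OF less.prems(3) y(1)])
      show "contractible (gm h (nbrs V R y) R)"
      proof (rule less.hyps[OF c1])
        show "finite (nbrs V R y)" using n2 less.prems(1) by (meson finite_Diff finite_subset)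
        show "inj_on h (nbrs V R y)" using n2 less.prems(3) by (meson Diff_subset inj_on_subset subset_trans)
        show "c \<in> nbrs V R y" by (rule n1)
        show "\<forall>z\<in>nbrs V R y. z \<noteq> c \<longrightarrow> R c z \<or> R z c" using less.prems(4) by (simp add: nbrs_def)
      qed
      show "contractible (gm h (V - {y}) R)"
      proof (rule less.hyps[OF c2])
        show "finite (V - {y})" using less.prems(1) by simp
        show "inj_on h (V - {y})" using less.prems(3) by (meson Diff_subset inj_on_subset)
        show "c \<in> V - {y}" using y less.prems(2) by simp
        show "\<forall>z\<in>V - {y}. z \<noteq> c \<longrightarrow> R c z \<or> R z c" using less.prems(4) by simp
      qed
    qed
  qed
qed

lemma fsg_gm:
  assumes "finite V" "inj_on h V"
  shows "finite_simple_graph (gm h V R)"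
  unfolding finite_simple_graph_def verts_gm edges_gm
proof (intro conjI ballI)
  show "finite (h ` V)" using assms(1) by simp
  fix e assume "e \<in> {{h a, h b} |a b. a \<in> V \<and> b \<in> V \<and> a \<noteq> b \<and> R a b}"
  then obtain a b where ab: "e = {h a, h b}" "a \<in> V" "b \<in> V" "a \<noteq> b" by blast
  have "h a \<noteq> h b" using ab inj_onD[OF assms(2)] by blast
  then show "\<exists>x y. x \<noteq> y \<and> x \<in> h ` V \<and> y \<in> h ` V \<and> e = {x, y}"
    using ab by (intro exI[of _ "h a"] exI[of _ "h b"]) simp
qed

lemma hstep_gm:
  assumes "finite V" "inj_on h V" "x \<in> V" "contractible (gm h (nbrs V R x) R)"
  shows "homotopy_step (gm h V R) (gm h (V - {x}) R)"
        "homotopy_step (gm h (V - {x}) R) (gm h V R)"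
proof -
  have f: "finite_simple_graph (gm h V R)" "finite_simple_graph (gm h (V - {x}) R)"
    using assms by (auto intro!: fsg_gm intro: inj_on_subset)
  have "removal_step (gm h V R) (gm h (V - {x}) R)"
    unfolding removal_step_def using assms sphere_gm delv_gm by (metis image_eqI verts_gm)
  then show "homotopy_step (gm h V R) (gm h (V - {x}) R)"
        "homotopy_step (gm h (V - {x}) R) (gm h V R)"
    using f unfolding homotopy_step_def by auto
qed


definition sadj :: "'a graph \<Rightarrow> 'b graph \<Rightarrow> ('a \<times> 'b) \<Rightarrow> ('a \<times> 'b) \<Rightarrow> bool" where
  "sadj G H p q \<longleftrightarrow> (fst p = fst q \<and> {snd p, snd q} \<in> edges H) \<or> (snd p = snd q \<and> {fst p, fst q} \<in> edges G)
     \<or> ({fst p, fst q} \<in> edges G \<and> {snd p, snd q} \<in> edges H)"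

definition cmp :: "('x set \<times> 'y set) \<Rightarrow> ('x set \<times> 'y set) \<Rightarrow> bool" where
  "cmp s t \<longleftrightarrow> (fst s \<subseteq> fst t \<and> snd s \<subseteq> snd t) \<or> (fst t \<subseteq> fst s \<and> snd t \<subseteq> snd s)"

definition le2 :: "('x set \<times> 'y set) \<Rightarrow> ('x set \<times> 'y set) \<Rightarrow> bool" where
  "le2 s t \<longleftrightarrow> fst s \<subseteq> fst t \<and> snd s \<subseteq> snd t"

definition KR :: "'a graph \<Rightarrow> 'b graph \<Rightarrow> (('a \<times> 'b) + ('a set \<times> 'b set)) \<Rightarrow> (('a \<times> 'b) + ('a set \<times> 'b set)) \<Rightarrow> bool" where
  "KR G H u v = (case u of Inl p \<Rightarrow> (case v of Inl q \<Rightarrow> sadj G H p q | Inr t \<Rightarrow> fst p \<in> fst t \<and> snd p \<in> snd t)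
     | Inr s \<Rightarrow> (case v of Inl q \<Rightarrow> fst q \<in> fst s \<and> snd q \<in> snd s | Inr t \<Rightarrow> cmp s t))"

lemma KR_simps[simp]:
  "KR G H (Inl p) (Inl q) = sadj G H p q"
  "KR G H (Inl p) (Inr t) = (fst p \<in> fst t \<and> snd p \<in> snd t)"
  "KR G H (Inr s) (Inl q) = (fst q \<in> fst s \<and> snd q \<in> snd s)"
  "KR G H (Inr s) (Inr t) = cmp s t"
  by (simp_all add: KR_def)

lemma sadj_sym: "sadj G H p q = sadj G H q p"
  unfolding sadj_def by (auto simp: insert_commute)

lemma cmp_sym: "cmp s t = cmp t s"
  unfolding cmp_def by auto

lemma nbrs_Inr:
  "nbrs (Inl ` P \<union> Inr ` E) (KR G H) (Inr s) =
     Inl ` {p\<in>P. fst p \<in> fst s \<and> snd p \<in> snd s} \<union> Inr ` {t\<in>E. t \<noteq> s \<and> cmp s t}"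
  unfolding nbrs_def by (auto simp: cmp_sym)

lemma nbrs_Inl:
  "nbrs (Inl ` P \<union> Inr ` E) (KR G H) (Inl p) =
     Inl ` {q\<in>P. q \<noteq> p \<and> sadj G H p q} \<union> Inr ` {t\<in>E. fst p \<in> fst t \<and> snd p \<in> snd t}"
  unfolding nbrs_def by (auto simp: sadj_sym)

lemma gm_comp:
  assumes "inj k"
  shows "gm (h \<circ> k) V (\<lambda>p q. R (k p) (k q)) = gm h (k ` V) R"
proof -
  have "{{(h \<circ> k) a, (h \<circ> k) b} |a b. a \<in> V \<and> b \<in> V \<and> a \<noteq> b \<and> R (k a) (k b)}
      = {{h a, h b} |a b. a \<in> k ` V \<and> b \<in> k ` V \<and> a \<noteq> b \<and> R a b}"
  proof (rule set_eqI, rule iffI)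
    fix e assume "e \<in> {{(h \<circ> k) a, (h \<circ> k) b} |a b. a \<in> V \<and> b \<in> V \<and> a \<noteq> b \<and> R (k a) (k b)}"
    then obtain a b where ab: "e = {h (k a), h (k b)}" "a \<in> V" "b \<in> V" "a \<noteq> b" "R (k a) (k b)" by auto
    have "k a \<noteq> k b" using ab(4) assms by (simp add: inj_eq)
    then show "e \<in> {{h a, h b} |a b. a \<in> k ` V \<and> b \<in> k ` V \<and> a \<noteq> b \<and> R a b}"
      using ab by blast
  next
    fix e assume "e \<in> {{h a, h b} |a b. a \<in> k ` V \<and> b \<in> k ` V \<and> a \<noteq> b \<and> R a b}"
    then obtain a b where ab: "e = {h a, h b}" "a \<in> k ` V" "b \<in> k ` V" "a \<noteq> b" "R a b" by blast
    then obtain a' b' where "a = k a'" "b = k b'" "a' \<in> V" "b' \<in> V" by blast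
    then show "e \<in> {{(h \<circ> k) a, (h \<circ> k) b} |a b. a \<in> V \<and> b \<in> V \<and> a \<noteq> b \<and> R (k a) (k b)}"
      using ab by auto
  qed
  then show ?thesis unfolding gm_def by (simp add: image_comp)
qed

lemma gmap_gm: "gmap f (gm g V R) = gm (f \<circ> g) V R"
proof -
  have "(`) f ` {{g a, g b} |a b. a \<in> V \<and> b \<in> V \<and> a \<noteq> b \<and> R a b} = {{(f \<circ> g) a, (f \<circ> g) b} |a b. a \<in> V \<and> b \<in> V \<and> a \<noteq> b \<and> R a b}"
    apply auto
    subgoal for a b by (rule image_eqI[of _ _ "{g a, g b}"]) auto
    done
  then show ?thesis unfolding gmap_def gm_def verts_def edges_def by (simp add: image_comp)
qed


lemma strong_gm: "strong_prod G H = gm id (verts G \<times> verts H) (sadj G H)"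
proof -
  have "{{(a, b), (c, d)} | a b c d. a \<in> verts G \<and> c \<in> verts G \<and> b \<in> verts H \<and> d \<in> verts H \<and>
        (a, b) \<noteq> (c, d) \<and>
        ((a = c \<and> {b, d} \<in> edges H) \<or> (b = d \<and> {a, c} \<in> edges G) \<or>
         ({a, c} \<in> edges G \<and> {b, d} \<in> edges H))}
     = {{id p, id q} |p q. p \<in> verts G \<times> verts H \<and> q \<in> verts G \<times> verts H \<and> p \<noteq> q \<and> sadj G H p q}"
  proof (rule set_eqI, rule iffI)
    fix e assume "e \<in> {{(a, b), (c, d)} | a b c d. a \<in> verts G \<and> c \<in> verts G \<and> b \<in> verts H \<and> d \<in> verts H \<and>
        (a, b) \<noteq> (c, d) \<and>
        ((a = c \<and> {b, d} \<in> edges H) \<or> (b = d \<and> {a, c} \<in> edges G) \<or>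
         ({a, c} \<in> edges G \<and> {b, d} \<in> edges H))}"
    then obtain a b c d where e: "e = {(a, b), (c, d)}" "a \<in> verts G" "c \<in> verts G" "b \<in> verts H" "d \<in> verts H"
        "(a, b) \<noteq> (c, d)" "sadj G H (a, b) (c, d)" unfolding sadj_def by auto
    show "e \<in> {{id p, id q} |p q. p \<in> verts G \<times> verts H \<and> q \<in> verts G \<times> verts H \<and> p \<noteq> q \<and> sadj G H p q}"
      using e by (intro CollectI exI[of _ "(a,b)"] exI[of _ "(c,d)"]) simp
  next
    fix e assume "e \<in> {{id p, id q} |p q. p \<in> verts G \<times> verts H \<and> q \<in> verts G \<times> verts H \<and> p \<noteq> q \<and> sadj G H p q}"
    then obtain a b c d where e: "e = {(a, b), (c, d)}" "a \<in> verts G" "c \<in> verts G" "b \<in> verts H" "d \<in> verts H"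
        "(a, b) \<noteq> (c, d)" "sadj G H (a, b) (c, d)" by auto
    then show "e \<in> {{(a, b), (c, d)} | a b c d. a \<in> verts G \<and> c \<in> verts G \<and> b \<in> verts H \<and> d \<in> verts H \<and>
        (a, b) \<noteq> (c, d) \<and>
        ((a = c \<and> {b, d} \<in> edges H) \<or> (b = d \<and> {a, c} \<in> edges G) \<or>
         ({a, c} \<in> edges G \<and> {b, d} \<in> edges H))}"
      unfolding sadj_def by (intro CollectI exI[of _ a] exI[of _ b] exI[of _ c] exI[of _ d]) simp
  qed
  then show ?thesis unfolding strong_prod_def gm_def by simp
qed

lemma simplex_gm: "simplex_prod G H = gm id (simplices G \<times> simplices H) cmp"
proof -
  have "{{(x, y), (u, v)} | x y u v. x \<in> simplices G \<and> u \<in> simplices G \<and>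
        y \<in> simplices H \<and> v \<in> simplices H \<and> (x, y) \<noteq> (u, v) \<and>
        ((x \<subseteq> u \<and> y \<subseteq> v) \<or> (u \<subseteq> x \<and> v \<subseteq> y))}
     = {{id p, id q} |p q. p \<in> simplices G \<times> simplices H \<and> q \<in> simplices G \<times> simplices H \<and> p \<noteq> q \<and> cmp p q}"
  proof (rule set_eqI, rule iffI)
    fix e assume "e \<in> {{(x, y), (u, v)} | x y u v. x \<in> simplices G \<and> u \<in> simplices G \<and>
        y \<in> simplices H \<and> v \<in> simplices H \<and> (x, y) \<noteq> (u, v) \<and>
        ((x \<subseteq> u \<and> y \<subseteq> v) \<or> (u \<subseteq> x \<and> v \<subseteq> y))}"
    then obtain a b c d where e: "e = {(a, b), (c, d)}" "a \<in> simplices G" "c \<in> simplices G" "b \<in> simplices H" "d \<in> simplices H"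
        "(a, b) \<noteq> (c, d)" "cmp (a, b) (c, d)" unfolding cmp_def by auto
    show "e \<in> {{id p, id q} |p q. p \<in> simplices G \<times> simplices H \<and> q \<in> simplices G \<times> simplices H \<and> p \<noteq> q \<and> cmp p q}"
      using e by (intro CollectI exI[of _ "(a,b)"] exI[of _ "(c,d)"]) simp
  next
    fix e assume "e \<in> {{id p, id q} |p q. p \<in> simplices G \<times> simplices H \<and> q \<in> simplices G \<times> simplices H \<and> p \<noteq> q \<and> cmp p q}"
    then obtain a b c d where e: "e = {(a, b), (c, d)}" "a \<in> simplices G" "c \<in> simplices G" "b \<in> simplices H" "d \<in> simplices H"
        "(a, b) \<noteq> (c, d)" "cmp (a, b) (c, d)" by auto
    then show "e \<in> {{(x, y), (u, v)} | x y u v. x \<in> simplices G \<and> u \<in> simplices G \<and>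
        y \<in> simplices H \<and> v \<in> simplices H \<and> (x, y) \<noteq> (u, v) \<and>
        ((x \<subseteq> u \<and> y \<subseteq> v) \<or> (u \<subseteq> x \<and> v \<subseteq> y))}"
      unfolding cmp_def by (intro CollectI exI[of _ a] exI[of _ b] exI[of _ c] exI[of _ d]) simp
  qed
  then show ?thesis unfolding simplex_prod_def gm_def by simp
qed

lemma simp_sub: "s \<in> simplices G \<Longrightarrow> s \<subseteq> verts G" by (simp add: simplices_def)
lemma simp_ne: "s \<in> simplices G \<Longrightarrow> s \<noteq> {}" by (simp add: simplices_def)
lemma simp_fin: "finite (verts G) \<Longrightarrow> s \<in> simplices G \<Longrightarrow> finite s"
  using simp_sub finite_subset by blast
lemma finite_simplices: "finite (verts G) \<Longrightarrow> finite (simplices G)"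
proof -
  assume "finite (verts G)"
  moreover have "simplices G \<subseteq> Pow (verts G)" by (auto simp: simplices_def)
  ultimately show ?thesis by (meson finite_Pow_iff finite_subset)
qed
lemma simp_single: "a \<in> verts G \<Longrightarrow> {a} \<in> simplices G" by (simp add: simplices_def)
lemma simp_clique: "x \<in> simplices G \<Longrightarrow> a \<in> x \<Longrightarrow> c \<in> x \<Longrightarrow> a \<noteq> c \<Longrightarrow> {a, c} \<in> edges G"
  by (simp add: simplices_def)
lemma simp_ins2:
  assumes "insert c A \<in> simplices G" "insert c' A \<in> simplices G" "c = c' \<or> {c, c'} \<in> edges G"
  shows "insert c' (insert c A) \<in> simplices G"
  using assms unfolding simplices_def by (auto simp: insert_commute)

lemma cross_clique:
  assumes "x \<in> simplices G" "y \<in> simplices H" "p \<in> x \<times> y" "q \<in> x \<times> y" "p \<noteq> q"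
  shows "sadj G H p q"
proof -
  obtain a b c d where p: "p = (a, b)" and q: "q = (c, d)" by (cases p, cases q) auto
  show ?thesis
  proof (cases "a = c")
    case True
    then have "b \<noteq> d" using assms(5) p q by simp
    then show ?thesis using True simp_clique[OF assms(2), of b d] assms(3,4) p q by (simp add: sadj_def)
  next
    case False
    then have "{a, c} \<in> edges G" using simp_clique[OF assms(1), of a c] assms(3,4) p q by simp
    then show ?thesis using simp_clique[OF assms(2), of b d] assms(3,4) p q by (cases "b = d") (simp_all add: sadj_def)
  qed
qed


lemma big_sub:
  assumes "P \<subseteq> verts G \<times> verts H" "E \<subseteq> simplices G \<times> simplices H"
  shows "Inl ` P \<union> Inr ` E \<subseteq> Inl ` (verts G \<times> verts H) \<union> Inr ` (simplices G \<times> simplices H)"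
  using image_mono[OF assms(1), of Inl] image_mono[OF assms(2), of Inr] by (rule Un_mono)

lemma L_contr:
  fixes G :: "'a graph" and H :: "'b graph"
  assumes fG: "finite (verts G)" and fH: "finite (verts H)"
    and inj: "inj_on h (Inl ` (verts G \<times> verts H) \<union> Inr ` (simplices G \<times> simplices H))"
  shows "finite E \<Longrightarrow> x \<in> simplices G \<Longrightarrow> y \<in> simplices H \<Longrightarrow> E \<subseteq> simplices G \<times> simplices H
    \<Longrightarrow> (\<forall>t\<in>E. le2 t (x, y)) \<Longrightarrow> (\<forall>t\<in>E. \<forall>t'\<in>simplices G \<times> simplices H. le2 t' t \<longrightarrow> t' \<in> E)
    \<Longrightarrow> contractible (gm h (Inl ` (x \<times> y) \<union> Inr ` E) (KR G H))"
proof (induction "card E" arbitrary: E x y rule: less_induct)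
  case less
  let ?V = "Inl ` (x \<times> y) \<union> Inr ` E"
  have xs: "x \<subseteq> verts G" "y \<subseteq> verts H" using less.prems(2,3) by (simp_all add: simp_sub)
  have "x \<times> y \<subseteq> verts G \<times> verts H" using xs by (rule Sigma_mono)
  then have injV: "inj_on h ?V" using inj_on_subset[OF inj big_sub] less.prems(4) by blast
  show ?case
  proof (cases "E = {}")
    case True
    obtain a where a: "a \<in> x" using simp_ne[OF less.prems(2)] by blast
    obtain b where b: "b \<in> y" using simp_ne[OF less.prems(3)] by blast
    let ?P = "Inl ` (x \<times> y) :: ('a \<times> 'b + 'a set \<times> 'b set) set"
    have V: "?V = ?P" using True by simp
    show ?thesis unfolding V
    proof (rule cone_gm[of _ "Inl (a, b)"])
      show "finite ?P" using simp_fin[OF fG less.prems(2)] simp_fin[OF fH less.prems(3)] by simp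
      show "Inl (a, b) \<in> ?P" using a b by simp
      show "inj_on h ?P" using injV V by simp
      show "\<forall>z\<in>?P. z \<noteq> Inl (a, b) \<longrightarrow> KR G H (Inl (a, b)) z \<or> KR G H z (Inl (a, b))"
      proof
        fix z assume "z \<in> ?P"
        then obtain q where q: "z = Inl q" "q \<in> x \<times> y" by blast
        show "z \<noteq> Inl (a, b) \<longrightarrow> KR G H (Inl (a, b)) z \<or> KR G H z (Inl (a, b))"
          using cross_clique[OF less.prems(2,3), of "(a,b)" q] q a b by auto
      qed
    qed
  next
    case False
    define f where "f t = card (fst t) + card (snd t)" for t :: "'a set \<times> 'b set"
    have "Max (f ` E) \<in> f ` E" using False less.prems(1) by simp
    then obtain s where s: "s \<in> E" "f s = Max (f ` E)" by auto
    have sS: "s \<in> simplices G \<times> simplices H" using s(1) less.prems(4) by blast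
    have smax: "t = s" if t: "t \<in> E" "le2 s t" for t
    proof -
      have tS: "t \<in> simplices G \<times> simplices H" using t(1) less.prems(4) by blast
      have ft: "finite (fst t)" "finite (snd t)" using tS simp_fin[OF fG] simp_fin[OF fH] by auto
      have le: "f t \<le> f s" using s(2) less.prems(1) t(1) by simp
      have c1: "card (fst s) \<le> card (fst t)" using card_mono[OF ft(1)] t(2) by (simp add: le2_def)
      have c2: "card (snd s) \<le> card (snd t)" using card_mono[OF ft(2)] t(2) by (simp add: le2_def)
      have "card (fst s) = card (fst t)" "card (snd s) = card (snd t)" using c1 c2 le by (simp_all add: f_def)
      then have "fst s = fst t" "snd s = snd t" using card_subset_eq ft t(2) by (metis le2_def)+
      then show ?thesis by (simp add: prod_eq_iff)
    qed
    have le_s: "le2 s (x, y)" using less.prems(5) s(1) by blast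
    define E' where "E' = {t\<in>E. t \<noteq> s \<and> le2 t s}"
    have A1: "{p\<in>x \<times> y. fst p \<in> fst s \<and> snd p \<in> snd s} = fst s \<times> snd s"
      using le_s by (auto simp: le2_def)
    have A2: "{t\<in>E. t \<noteq> s \<and> cmp s t} = E'"
      unfolding E'_def cmp_def using smax by (auto simp: le2_def)
    have nb: "nbrs ?V (KR G H) (Inr s) = Inl ` (fst s \<times> snd s) \<union> Inr ` E'"
      unfolding nbrs_Inr A1 A2 ..
    have del: "?V - {Inr s} = Inl ` (x \<times> y) \<union> Inr ` (E - {s})" by auto
    show ?thesis
    proof (rule contr_step_gm[OF injV, of "Inr s"])
      show "Inr s \<in> ?V" using s by simp
      have E'sub: "E' \<subseteq> E - {s}" unfolding E'_def by blast
      have cardE': "card E' < card E"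
        using le_less_trans[OF card_mono[OF _ E'sub] card_Diff1_less[OF less.prems(1) s(1)]] less.prems(1) by simp
      show "contractible (gm h (nbrs ?V (KR G H) (Inr s)) (KR G H))" unfolding nb
      proof (rule less.hyps[OF cardE'])
        show "finite E'" using E'sub less.prems(1) by (meson finite_Diff finite_subset)
        show "fst s \<in> simplices G" "snd s \<in> simplices H" using sS by auto
        show "E' \<subseteq> simplices G \<times> simplices H" using E'sub less.prems(4) by blast
        show "\<forall>t\<in>E'. le2 t (fst s, snd s)" by (simp add: E'_def)
        show "\<forall>t\<in>E'. \<forall>t'\<in>simplices G \<times> simplices H. le2 t' t \<longrightarrow> t' \<in> E'"
        proof (intro ballI impI)
          fix t t' assume t: "t \<in> E'" "t' \<in> simplices G \<times> simplices H" "le2 t' t"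
          have "t' \<in> E" using less.prems(6) t E'sub by blast
          moreover have "le2 t' s" using t(1,3) by (auto simp: E'_def le2_def)
          moreover have "t' \<noteq> s"
          proof
            assume "t' = s"
            then have "le2 s t" using t(3) by simp
            moreover have "t \<in> E" "t \<noteq> s" using t(1) by (simp_all add: E'_def)
            ultimately show False using smax by blast
          qed
          ultimately show "t' \<in> E'" by (simp add: E'_def)
        qed
      qed
      have cardE2: "card (E - {s}) < card E" using card_Diff1_less[OF less.prems(1) s(1)] .
      show "contractible (gm h (?V - {Inr s}) (KR G H))" unfolding del
      proof (rule less.hyps[OF cardE2])
        show "finite (E - {s})" using less.prems(1) by simp
        show "x \<in> simplices G" "y \<in> simplices H" using less.prems(2,3) .
        show "E - {s} \<subseteq> simplices G \<times> simplices H" using less.prems(4) by blast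
        show "\<forall>t\<in>E - {s}. le2 t (x, y)" using less.prems(5) by simp
        show "\<forall>t\<in>E - {s}. \<forall>t'\<in>simplices G \<times> simplices H. le2 t' t \<longrightarrow> t' \<in> E - {s}"
        proof (intro ballI impI)
          fix t t' assume t: "t \<in> E - {s}" "t' \<in> simplices G \<times> simplices H" "le2 t' t"
          have "t' \<in> E" using less.prems(6) t by blast
          moreover have "t' \<noteq> s"
          proof
            assume "t' = s"
            then have "le2 s t" using t(3) by simp
            moreover have "t \<in> E" "t \<noteq> s" using t(1) by simp_all
            ultimately show False using smax by blast
          qed
          ultimately show "t' \<in> E - {s}" by simp
        qed
      qed
    qed
  qed
qed


lemma sadj_fst: "sadj G H q q' \<Longrightarrow> fst q = fst q' \<or> {fst q, fst q'} \<in> edges G"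
  unfolding sadj_def by auto
lemma sadj_snd: "sadj G H q q' \<Longrightarrow> snd q = snd q' \<or> {snd q, snd q'} \<in> edges H"
  unfolding sadj_def by auto

lemma M_contr:
  fixes G :: "'a graph" and H :: "'b graph"
  assumes fG: "finite (verts G)" and fH: "finite (verts H)"
    and inj: "inj_on h (Inl ` (verts G \<times> verts H) \<union> Inr ` (simplices G \<times> simplices H))"
  shows "finite Q \<Longrightarrow> A \<in> simplices G \<Longrightarrow> B \<in> simplices H \<Longrightarrow> Q \<subseteq> verts G \<times> verts H
    \<Longrightarrow> (\<forall>q\<in>Q. insert (fst q) A \<in> simplices G \<and> insert (snd q) B \<in> simplices H)
    \<Longrightarrow> contractible (gm h (Inl ` Q \<union> Inr ` {t \<in> simplices G \<times> simplices H. le2 (A, B) t}) (KR G H))"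
proof (induction "card Q" arbitrary: Q A B rule: less_induct)
  case less
  let ?T = "{t \<in> simplices G \<times> simplices H. le2 (A, B) t}"
  let ?V = "Inl ` Q \<union> Inr ` ?T"
  have Tsub: "?T \<subseteq> simplices G \<times> simplices H" by blast
  have injV: "inj_on h ?V" using inj_on_subset[OF inj big_sub[OF less.prems(4) Tsub]] .
  have finT: "finite ?T" using finite_simplices[OF fG] finite_simplices[OF fH] by simp
  show ?case
  proof (cases "Q = {}")
    case True
    let ?P = "Inr ` ?T :: ('a \<times> 'b + 'a set \<times> 'b set) set"
    have V: "?V = ?P" using True by simp
    show ?thesis unfolding V
    proof (rule cone_gm[of _ "Inr (A, B)"])
      show "finite ?P" using finT by simp
      show "Inr (A, B) \<in> ?P" using less.prems(2,3) by (simp add: le2_def)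
      show "inj_on h ?P" using injV V by simp
      show "\<forall>z\<in>?P. z \<noteq> Inr (A, B) \<longrightarrow> KR G H (Inr (A, B)) z \<or> KR G H z (Inr (A, B))"
      proof
        fix z assume "z \<in> ?P"
        then obtain t where t: "z = Inr t" "t \<in> ?T" by blast
        then show "z \<noteq> Inr (A, B) \<longrightarrow> KR G H (Inr (A, B)) z \<or> KR G H z (Inr (A, B))"
          by (simp add: cmp_def le2_def)
      qed
    qed
  next
    case False
    then obtain q where q: "q \<in> Q" by blast
    define A' where "A' = insert (fst q) A"
    define B' where "B' = insert (snd q) B"
    define Q' where "Q' = {q'\<in>Q. q' \<noteq> q \<and> sadj G H q q'}"
    have T': "{t\<in>?T. fst q \<in> fst t \<and> snd q \<in> snd t} = {t \<in> simplices G \<times> simplices H. le2 (A', B') t}"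
      unfolding A'_def B'_def le2_def by auto
    have nb: "nbrs ?V (KR G H) (Inl q) = Inl ` Q' \<union> Inr ` {t \<in> simplices G \<times> simplices H. le2 (A', B') t}"
      unfolding nbrs_Inl T' Q'_def ..
    have del: "?V - {Inl q} = Inl ` (Q - {q}) \<union> Inr ` ?T" by auto
    have cardQ2: "card (Q - {q}) < card Q" using card_Diff1_less[OF less.prems(1) q] .
    have Q'sub: "Q' \<subseteq> Q - {q}" unfolding Q'_def by blast
    have cardQ': "card Q' < card Q"
      using le_less_trans[OF card_mono[OF _ Q'sub] cardQ2] less.prems(1) by simp
    show ?thesis
    proof (rule contr_step_gm[OF injV, of "Inl q"])
      show "Inl q \<in> ?V" using q by simp
      show "contractible (gm h (nbrs ?V (KR G H) (Inl q)) (KR G H))" unfolding nb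
      proof (rule less.hyps[OF cardQ'])
        show "finite Q'" using Q'sub less.prems(1) by (meson finite_Diff finite_subset)
        show "A' \<in> simplices G" "B' \<in> simplices H" unfolding A'_def B'_def using less.prems(5) q by auto
        show "Q' \<subseteq> verts G \<times> verts H" using Q'sub less.prems(4) by blast
        show "\<forall>q'\<in>Q'. insert (fst q') A' \<in> simplices G \<and> insert (snd q') B' \<in> simplices H"
        proof
          fix q' assume q': "q' \<in> Q'"
          then have q'Q: "q' \<in> Q" and sa: "sadj G H q q'" by (simp_all add: Q'_def)
          show "insert (fst q') A' \<in> simplices G \<and> insert (snd q') B' \<in> simplices H"
            unfolding A'_def B'_def
            using simp_ins2[of "fst q" A G "fst q'"] simp_ins2[of "snd q" B H "snd q'"]
              less.prems(5) q q'Q sadj_fst[OF sa] sadj_snd[OF sa] by blast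
        qed
      qed
      show "contractible (gm h (?V - {Inl q}) (KR G H))" unfolding del
      proof (rule less.hyps[OF cardQ2])
        show "finite (Q - {q})" using less.prems(1) by simp
        show "A \<in> simplices G" "B \<in> simplices H" using less.prems(2,3) .
        show "Q - {q} \<subseteq> verts G \<times> verts H" using less.prems(4) by blast
        show "\<forall>q'\<in>Q - {q}. insert (fst q') A \<in> simplices G \<and> insert (snd q') B \<in> simplices H"
          using less.prems(5) by blast
      qed
    qed
  qed
qed


lemma max_exists:
  fixes D :: "('a set \<times> 'b set) set"
  assumes fG: "finite (verts G)" and fH: "finite (verts H)"
    and D: "finite D" "D \<noteq> {}" "D \<subseteq> simplices G \<times> simplices H"
  shows "\<exists>s\<in>D. \<forall>t\<in>D. le2 s t \<longrightarrow> t = s"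
proof -
  define f where "f t = card (fst t) + card (snd t)" for t :: "'a set \<times> 'b set"
  have "Max (f ` D) \<in> f ` D" using D by simp
  then obtain s where s: "s \<in> D" "f s = Max (f ` D)" by auto
  have "t = s" if t: "t \<in> D" "le2 s t" for t
  proof -
    have tS: "t \<in> simplices G \<times> simplices H" using t(1) D(3) by blast
    have ft: "finite (fst t)" "finite (snd t)" using tS simp_fin[OF fG] simp_fin[OF fH] by auto
    have le: "f t \<le> f s" using s(2) D(1) t(1) by simp
    have c1: "card (fst s) \<le> card (fst t)" using card_mono[OF ft(1)] t(2) by (simp add: le2_def)
    have c2: "card (snd s) \<le> card (snd t)" using card_mono[OF ft(2)] t(2) by (simp add: le2_def)
    have "card (fst s) = card (fst t)" "card (snd s) = card (snd t)" using c1 c2 le by (simp_all add: f_def)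
    then have "fst s = fst t" "snd s = snd t" using card_subset_eq ft t(2) by (metis le2_def)+
    then show ?thesis by (simp add: prod_eq_iff)
  qed
  then show ?thesis using s(1) by blast
qed

lemma chain1:
  fixes G :: "'a graph" and H :: "'b graph"
  assumes fG: "finite (verts G)" and fH: "finite (verts H)"
    and inj: "inj_on h (Inl ` (verts G \<times> verts H) \<union> Inr ` (simplices G \<times> simplices H))"
  shows "finite D \<Longrightarrow> D \<subseteq> simplices G \<times> simplices H
    \<Longrightarrow> (\<forall>t\<in>D. \<forall>t'\<in>simplices G \<times> simplices H. le2 t' t \<longrightarrow> t' \<in> D)
    \<Longrightarrow> homotopy_step\<^sup>*\<^sup>* (gm h (Inl ` (verts G \<times> verts H)) (KR G H))
          (gm h (Inl ` (verts G \<times> verts H) \<union> Inr ` D) (KR G H))"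
proof (induction "card D" arbitrary: D rule: less_induct)
  case less
  let ?PV = "verts G \<times> verts H"
  let ?V = "Inl ` ?PV \<union> Inr ` D"
  show ?case
  proof (cases "D = {}")
    case True then show ?thesis by simp
  next
    case False
    obtain s where s: "s \<in> D" and smax: "\<And>t. t \<in> D \<Longrightarrow> le2 s t \<Longrightarrow> t = s"
      using max_exists[OF fG fH less.prems(1) False less.prems(2)] by blast
    have sS: "s \<in> simplices G \<times> simplices H" using s less.prems(2) by blast
    have injV: "inj_on h ?V" using inj_on_subset[OF inj big_sub[OF subset_refl less.prems(2)]] .
    have finV: "finite ?V" using less.prems(1) fG fH by simp
    have cardD2: "card (D - {s}) < card D" using card_Diff1_less[OF less.prems(1) s] .
    have down2: "\<forall>t\<in>D - {s}. \<forall>t'\<in>simplices G \<times> simplices H. le2 t' t \<longrightarrow> t' \<in> D - {s}"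
    proof (intro ballI impI)
      fix t t' assume t: "t \<in> D - {s}" "t' \<in> simplices G \<times> simplices H" "le2 t' t"
      have "t' \<in> D" using less.prems(3) t by blast
      moreover have "t' \<noteq> s"
      proof
        assume "t' = s"
        then have "le2 s t" using t(3) by simp
        moreover have "t \<in> D" "t \<noteq> s" using t(1) by simp_all
        ultimately show False using smax by blast
      qed
      ultimately show "t' \<in> D - {s}" by simp
    qed
    have IH: "homotopy_step\<^sup>*\<^sup>* (gm h (Inl ` ?PV) (KR G H)) (gm h (Inl ` ?PV \<union> Inr ` (D - {s})) (KR G H))"
      using less.hyps[OF cardD2] less.prems(1,2) down2 by blast
    have del: "?V - {Inr s} = Inl ` ?PV \<union> Inr ` (D - {s})" by auto
    define E' where "E' = {t\<in>D. t \<noteq> s \<and> le2 t s}"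
    have A1: "{p\<in>?PV. fst p \<in> fst s \<and> snd p \<in> snd s} = fst s \<times> snd s"
      using sS simp_sub[of "fst s" G] simp_sub[of "snd s" H] by auto
    have A2: "{t\<in>D. t \<noteq> s \<and> cmp s t} = E'"
      unfolding E'_def cmp_def using smax by (auto simp: le2_def)
    have nb: "nbrs ?V (KR G H) (Inr s) = Inl ` (fst s \<times> snd s) \<union> Inr ` E'"
      unfolding nbrs_Inr A1 A2 ..
    have E'sub: "E' \<subseteq> D" unfolding E'_def by blast
    have contr: "contractible (gm h (nbrs ?V (KR G H) (Inr s)) (KR G H))" unfolding nb
    proof (rule L_contr[OF fG fH inj])
      show "finite E'" using E'sub less.prems(1) by (meson finite_subset)
      show "fst s \<in> simplices G" "snd s \<in> simplices H" using sS by auto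
      show "E' \<subseteq> simplices G \<times> simplices H" using E'sub less.prems(2) by blast
      show "\<forall>t\<in>E'. le2 t (fst s, snd s)" by (simp add: E'_def)
      show "\<forall>t\<in>E'. \<forall>t'\<in>simplices G \<times> simplices H. le2 t' t \<longrightarrow> t' \<in> E'"
      proof (intro ballI impI)
        fix t t' assume t: "t \<in> E'" "t' \<in> simplices G \<times> simplices H" "le2 t' t"
        have "t' \<in> D" using less.prems(3) t E'sub by blast
        moreover have "le2 t' s" using t(1,3) by (auto simp: E'_def le2_def)
        moreover have "t' \<noteq> s"
        proof
          assume "t' = s"
          then have "le2 s t" using t(3) by simp
          moreover have "t \<in> D" "t \<noteq> s" using t(1) by (simp_all add: E'_def)
          ultimately show False using smax by blast
        qed
        ultimately show "t' \<in> E'" by (simp add: E'_def)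
      qed
    qed
    have "homotopy_step (gm h (?V - {Inr s}) (KR G H)) (gm h ?V (KR G H))"
      using hstep_gm(2)[OF finV injV _ contr] s by simp
    then show ?thesis using IH unfolding del by (rule rtranclp.rtrancl_into_rtrancl[rotated])
  qed
qed

lemma chain2:
  fixes G :: "'a graph" and H :: "'b graph"
  assumes fG: "finite (verts G)" and fH: "finite (verts H)"
    and inj: "inj_on h (Inl ` (verts G \<times> verts H) \<union> Inr ` (simplices G \<times> simplices H))"
  shows "finite W \<Longrightarrow> W \<subseteq> verts G \<times> verts H
    \<Longrightarrow> homotopy_step\<^sup>*\<^sup>* (gm h (Inl ` W \<union> Inr ` (simplices G \<times> simplices H)) (KR G H))
          (gm h (Inr ` (simplices G \<times> simplices H)) (KR G H))"
proof (induction W rule: finite_induct)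
  case empty then show ?case by simp
next
  case (insert w W)
  let ?SV = "simplices G \<times> simplices H"
  let ?V = "Inl ` insert w W \<union> Inr ` ?SV"
  have injV: "inj_on h ?V" using inj_on_subset[OF inj big_sub[OF insert.prems subset_refl]] .
  have finV: "finite ?V" using insert.hyps(1) finite_simplices[OF fG] finite_simplices[OF fH] by simp
  have wV: "w \<in> verts G \<times> verts H" using insert.prems by blast
  have del: "?V - {Inl w} = Inl ` W \<union> Inr ` ?SV" using insert.hyps(2) by auto
  define Q where "Q = {q\<in>insert w W. q \<noteq> w \<and> sadj G H w q}"
  have T: "{t\<in>?SV. fst w \<in> fst t \<and> snd w \<in> snd t} = {t \<in> ?SV. le2 ({fst w}, {snd w}) t}"
    by (auto simp: le2_def)
  have nb: "nbrs ?V (KR G H) (Inl w) = Inl ` Q \<union> Inr ` {t \<in> ?SV. le2 ({fst w}, {snd w}) t}"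
    unfolding nbrs_Inl T Q_def ..
  have contr: "contractible (gm h (nbrs ?V (KR G H) (Inl w)) (KR G H))" unfolding nb
  proof (rule M_contr[OF fG fH inj])
    show "finite Q" unfolding Q_def using insert.hyps(1) by simp
    show "{fst w} \<in> simplices G" "{snd w} \<in> simplices H" using wV by (auto intro: simp_single)
    show "Q \<subseteq> verts G \<times> verts H" unfolding Q_def using insert.prems by blast
    show "\<forall>q\<in>Q. insert (fst q) {fst w} \<in> simplices G \<and> insert (snd q) {snd w} \<in> simplices H"
    proof
      fix q assume q: "q \<in> Q"
      then have qV: "q \<in> verts G \<times> verts H" and sa: "sadj G H w q"
        using insert.prems by (auto simp: Q_def)
      have "insert (fst q) (insert (fst w) {}) \<in> simplices G"
        by (rule simp_ins2) (use wV qV sadj_fst[OF sa] in \<open>auto intro: simp_single\<close>)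
      moreover have "insert (snd q) (insert (snd w) {}) \<in> simplices H"
        by (rule simp_ins2) (use wV qV sadj_snd[OF sa] in \<open>auto intro: simp_single\<close>)
      ultimately show "insert (fst q) {fst w} \<in> simplices G \<and> insert (snd q) {snd w} \<in> simplices H" by simp
    qed
  qed
  have "homotopy_step (gm h ?V (KR G H)) (gm h (?V - {Inl w}) (KR G H))"
    using hstep_gm(1)[OF finV injV _ contr] by simp
  moreover have "homotopy_step\<^sup>*\<^sup>* (gm h (?V - {Inl w}) (KR G H)) (gm h (Inr ` ?SV) (KR G H))"
    unfolding del using insert.IH insert.prems by blast
  ultimately show ?case by (rule converse_rtranclp_into_rtranclp)
qed

theorem mainTheorem2:
  fixes G :: "'a graph" and H :: "'b graph"
  assumes "finite_simple_graph G" and "finite_simple_graph H"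
  shows "homotopic (strong_prod G H) (simplex_prod G H)"
proof -
  have fG: "finite (verts G)" and fH: "finite (verts H)" using assms by (simp_all add: finite_simple_graph_def)
  let ?PV = "verts G \<times> verts H"
  let ?SV = "simplices G \<times> simplices H"
  let ?All = "Inl ` ?PV \<union> Inr ` ?SV :: ('a \<times> 'b + 'a set \<times> 'b set) set"
  have "finite ?All" using fG fH finite_simplices[OF fG] finite_simplices[OF fH] by simp
  then have "\<exists>(f :: ('a \<times> 'b + 'a set \<times> 'b set) \<Rightarrow> nat) n. f ` ?All = {i. i < n} \<and> inj_on f ?All"
    by (rule finite_imp_inj_to_nat_seg)
  then obtain h :: "('a \<times> 'b + 'a set \<times> 'b set) \<Rightarrow> nat" and n where hn: "h ` ?All = {i. i < n}" and inj: "inj_on h ?All"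
    by (elim exE conjE)
  have i1: "inj_on (h \<circ> Inl) ?PV"
    using comp_inj_on[OF inj_Inl inj_on_subset[OF inj Un_upper1]] .
  have i2: "inj_on (h \<circ> Inr) ?SV"
    using comp_inj_on[OF inj_Inr inj_on_subset[OF inj Un_upper2]] .
  have e1: "gmap (h \<circ> Inl) (strong_prod G H) = gm h (Inl ` ?PV) (KR G H)"
  proof -
    have "gmap (h \<circ> Inl) (strong_prod G H) = gm (h \<circ> Inl) ?PV (sadj G H)"
      unfolding strong_gm gmap_gm by simp
    also have "sadj G H = (\<lambda>p q. KR G H (Inl p) (Inl q))" by simp
    also have "gm (h \<circ> Inl) ?PV (\<lambda>p q. KR G H (Inl p) (Inl q)) = gm h (Inl ` ?PV) (KR G H)"
      by (rule gm_comp[OF inj_Inl])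
    finally show ?thesis .
  qed
  have e2: "gmap (h \<circ> Inr) (simplex_prod G H) = gm h (Inr ` ?SV) (KR G H)"
  proof -
    have "gmap (h \<circ> Inr) (simplex_prod G H) = gm (h \<circ> Inr) ?SV cmp"
      unfolding simplex_gm gmap_gm by simp
    also have "cmp = (\<lambda>p q. KR G H (Inr p) (Inr q))" by simp
    also have "gm (h \<circ> Inr) ?SV (\<lambda>p q. KR G H (Inr p) (Inr q)) = gm h (Inr ` ?SV) (KR G H)"
      by (rule gm_comp[OF inj_Inr])
    finally show ?thesis .
  qed
  have c1: "homotopy_step\<^sup>*\<^sup>* (gm h (Inl ` ?PV) (KR G H)) (gm h ?All (KR G H))"
    using chain1[OF fG fH inj, of ?SV] finite_simplices[OF fG] finite_simplices[OF fH] by simp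
  have c2: "homotopy_step\<^sup>*\<^sup>* (gm h ?All (KR G H)) (gm h (Inr ` ?SV) (KR G H))"
    using chain2[OF fG fH inj, of ?PV] fG fH by simp
  have vs: "verts (strong_prod G H) = ?PV" by (simp add: strong_gm)
  have vx: "verts (simplex_prod G H) = ?SV" by (simp add: simplex_gm)
  have "homotopy_step\<^sup>*\<^sup>* (gmap (h \<circ> Inl) (strong_prod G H)) (gmap (h \<circ> Inr) (simplex_prod G H))"
    unfolding e1 e2 using c1 c2 by (rule rtranclp_trans)
  moreover have "inj_on (h \<circ> Inl) (verts (strong_prod G H))" unfolding vs by (rule i1)
  moreover have "inj_on (h \<circ> Inr) (verts (simplex_prod G H))" unfolding vx by (rule i2)
  ultimately show ?thesis unfolding homotopic_def by (intro exI[of _ "h \<circ> Inl"] exI[of _ "h \<circ> Inr"]) simp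
qed

end
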